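(* Let $I,J\subset[n]$ be nonempty with $I\cup J=[n]$ and $I\cap J=\emptyset$, and let $x,a\in(\mathbb{R}\cup\{-\infty\})^n$, neither identically $-\infty$. Then $$\operatorname{dist}_H(x,\mathcal H^{IJ}_a)=\Big|\max_{i\in I}(x_i+a_i)-\max_{j\in J}(x_j+a_j)\Big|$$ if at least one of these two maxima is finite, and $\operatorname{dist}_H(x,\mathcal H^{IJ}_a)=0$ otherwise.
   Context: $-\infty+c=-\infty$; $|\pm\infty|=+\infty$. The signed tropical hyperplane of type $(I,J)$ is $\mathcal H^{IJ}_a=\{y\in(\mathbb{R}\cup\{-\infty\})^n:\max_{i\in I}(a_i+y_i)=\max_{j\in J}(a_j+y_j)\}$. Hilbert's projective metric: $d(x,y)=\inf\{\lambda-\mu:\lambda,\mu\in\mathbb{R},\ \mu+y_l\le x_l\le\lambda+y_l\ \forall l\}\in[0,+\infty]$ (and $d(\bot,\bot)=0$); $\operatorname{dist}_H(x,B)=\inf_{y\in B}d(x,y)$. *)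

theory Defs
  imports "HOL-Analysis.Analysis"
begin

text \<open>Points of (R \<union> {-\<infinity>})^n are represented as functions nat \<Rightarrow> ereal whose
  coordinates 1..n are never +\<infinity>; coordinates outside {1..n} are irrelevant.\<close>

definition tpoints :: "nat \<Rightarrow> (nat \<Rightarrow> ereal) set" where
  "tpoints n = {y. \<forall>l\<in>{1..n}. y l \<noteq> \<infinity>}"

definition is_bot :: "nat \<Rightarrow> (nat \<Rightarrow> ereal) \<Rightarrow> bool" where
  "is_bot n y \<longleftrightarrow> (\<forall>l\<in>{1..n}. y l = -\<infinity>)"

definition signed_hyperplane ::
  "nat \<Rightarrow> nat set \<Rightarrow> nat set \<Rightarrow> (nat \<Rightarrow> ereal) \<Rightarrow> (nat \<Rightarrow> ereal) set" where
  "signed_hyperplane n I J a =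
     {y \<in> tpoints n. Max ((\<lambda>i. a i + y i) ` I) = Max ((\<lambda>j. a j + y j) ` J)}"

text \<open>Hilbert's projective metric, with values in [0,+\<infinity>] (Inf of the empty set is +\<infinity>),
  and d(bot,bot) = 0.\<close>
definition hilbert_dist :: "nat \<Rightarrow> (nat \<Rightarrow> ereal) \<Rightarrow> (nat \<Rightarrow> ereal) \<Rightarrow> ereal" where
  "hilbert_dist n x y =
     (if is_bot n x \<and> is_bot n y then 0
      else Inf {ereal (lam - mu) | lam mu.
                 \<forall>l\<in>{1..n}. ereal mu + y l \<le> x l \<and> x l \<le> ereal lam + y l})"

definition hilbert_setdist :: "nat \<Rightarrow> (nat \<Rightarrow> ereal) \<Rightarrow> (nat \<Rightarrow> ereal) set \<Rightarrow> ereal" where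
  "hilbert_setdist n x B = (INF y\<in>B. hilbert_dist n x y)"

end

theory Submission
  imports Defs
begin

lemma Max_le_shift:
  fixes f g :: "nat \<Rightarrow> ereal"
  assumes "finite A" "A \<noteq> {}" "\<forall>i\<in>A. f i \<le> c + g i"
  shows "Max (f ` A) \<le> c + Max (g ` A)"
proof (rule Max.boundedI)
  fix z assume "z \<in> f ` A"
  then obtain i where i: "i \<in> A" "z = f i" by auto
  have "g i \<le> Max (g ` A)" using assms i by auto
  then have "c + g i \<le> c + Max (g ` A)" by (rule add_left_mono)
  then show "z \<le> c + Max (g ` A)" using assms i by (metis order_trans)
qed (use assms in auto)

lemma Max_ge_shift:
  fixes f g :: "nat \<Rightarrow> ereal"
  assumes "finite A" "A \<noteq> {}" "\<forall>i\<in>A. c + g i \<le> f i"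
  shows "c + Max (g ` A) \<le> Max (f ` A)"
proof -
  have "Max (g ` A) \<in> g ` A" using assms by auto
  then obtain i where i: "i \<in> A" "Max (g ` A) = g i" by auto
  have "f i \<le> Max (f ` A)" using assms i by auto
  then show ?thesis using assms i by (metis order_trans)
qed

lemma dist_nonneg:
  assumes "\<not> is_bot n x" "x \<in> tpoints n"
  shows "0 \<le> hilbert_dist n x y"
proof -
  obtain l where l: "l \<in> {1..n}" "x l \<noteq> -\<infinity>" "x l \<noteq> \<infinity>" using assms unfolding is_bot_def tpoints_def by auto
  have "0 \<le> z" if zin: "z \<in> {ereal (lam - mu) | lam mu.
                 \<forall>l\<in>{1..n}. ereal mu + y l \<le> x l \<and> x l \<le> ereal lam + y l}" for z
  proof -
    obtain lam mu where z: "z = ereal (lam - mu)" and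
      h: "\<forall>l\<in>{1..n}. ereal mu + y l \<le> x l \<and> x l \<le> ereal lam + y l" using zin by blast
    have h1: "ereal mu + y l \<le> x l" "x l \<le> ereal lam + y l" using h l by auto
    have "mu \<le> lam" using h1 l(2,3) by (cases "x l"; cases "y l") auto
    then show ?thesis using z by auto
  qed
  then show ?thesis using assms unfolding hilbert_dist_def by (simp only: if_False de_Morgan_conj simp_thms) (rule Inf_greatest, blast)
qed

lemma dist_upper:
  assumes "\<not> is_bot n x" "\<forall>l\<in>{1..n}. ereal mu + y l \<le> x l \<and> x l \<le> ereal lam + y l"
  shows "hilbert_dist n x y \<le> ereal (lam - mu)"
  using assms unfolding hilbert_dist_def by (auto intro!: Inf_lower)

lemma dist_lower:
  assumes "\<not> is_bot n x"
    and "\<And>lam mu. \<forall>l\<in>{1..n}. ereal mu + y l \<le> x l \<and> x l \<le> ereal lam + y l \<Longrightarrow> t \<le> ereal (lam - mu)"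
  shows "t \<le> hilbert_dist n x y"
  using assms unfolding hilbert_dist_def by (auto intro!: Inf_greatest)

lemma hyp_sym: "signed_hyperplane n I J a = signed_hyperplane n J I a"
  unfolding signed_hyperplane_def by auto

lemma lower_key:
  fixes x y a :: "nat \<Rightarrow> ereal"
  assumes IJ: "I \<noteq> {}" "J \<noteq> {}" "I \<union> J = {1..n}"
    and y: "y \<in> signed_hyperplane n I J a"
    and h: "\<forall>l\<in>{1..n}. ereal mu + y l \<le> x l \<and> x l \<le> ereal lam + y l"
    and nb: "\<not> (Max ((\<lambda>i. x i + a i) ` I) = -\<infinity> \<and> Max ((\<lambda>j. x j + a j) ` J) = -\<infinity>)"
    and ni: "Max ((\<lambda>i. x i + a i) ` I) \<noteq> \<infinity>" "Max ((\<lambda>j. x j + a j) ` J) \<noteq> \<infinity>"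
  shows "\<bar>Max ((\<lambda>i. x i + a i) ` I) - Max ((\<lambda>j. x j + a j) ` J)\<bar> \<le> ereal (lam - mu)"
proof -
  have fin: "finite I" "finite J" using IJ(3) by (metis finite_Un finite_atLeastAtMost)+
  define c where "c = Max ((\<lambda>i. y i + a i) ` I)"
  have cI: "c = Max ((\<lambda>i. a i + y i) ` I)" unfolding c_def by (simp add: add.commute)
  have cJ: "c = Max ((\<lambda>j. y j + a j) ` J)"
    using y cI unfolding signed_hyperplane_def by (simp add: add.commute)
  have hI: "\<forall>i\<in>I. ereal mu + y i \<le> x i \<and> x i \<le> ereal lam + y i" using h IJ(3) by auto
  have hJ: "\<forall>i\<in>J. ereal mu + y i \<le> x i \<and> x i \<le> ereal lam + y i" using h IJ(3) by auto
  have 1: "Max ((\<lambda>i. x i + a i) ` I) \<le> ereal lam + c"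
    unfolding c_def
    by (rule Max_le_shift[OF fin(1) IJ(1)]) (use hI in \<open>auto simp: add.assoc[symmetric] intro: add_right_mono\<close>)
  have 2: "Max ((\<lambda>j. x j + a j) ` J) \<le> ereal lam + c"
    unfolding cJ
    by (rule Max_le_shift[OF fin(2) IJ(2)]) (use hJ in \<open>auto simp: add.assoc[symmetric] intro: add_right_mono\<close>)
  have 3: "ereal mu + c \<le> Max ((\<lambda>i. x i + a i) ` I)"
    unfolding c_def
    by (rule Max_ge_shift[OF fin(1) IJ(1)]) (use hI in \<open>auto simp: add.assoc[symmetric] intro: add_right_mono\<close>)
  have 4: "ereal mu + c \<le> Max ((\<lambda>j. x j + a j) ` J)"
    unfolding cJ
    by (rule Max_ge_shift[OF fin(2) IJ(2)]) (use hJ in \<open>auto simp: add.assoc[symmetric] intro: add_right_mono\<close>)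
  show ?thesis using 1 2 3 4 nb ni
    by (cases "Max ((\<lambda>i. x i + a i) ` I)"; cases "Max ((\<lambda>j. x j + a j) ` J)"; cases c) auto
qed

lemma upper_key:
  fixes x a :: "nat \<Rightarrow> ereal"
  assumes IJ: "I \<noteq> {}" "J \<noteq> {}" "I \<union> J = {1..n}" "I \<inter> J = {}"
    and x: "x \<in> tpoints n" "\<not> is_bot n x"
    and p: "Max ((\<lambda>i. x i + a i) ` I) = ereal p"
    and q: "Max ((\<lambda>j. x j + a j) ` J) = ereal q"
    and pq: "q \<le> p"
  shows "\<exists>y\<in>signed_hyperplane n I J a. hilbert_dist n x y \<le> ereal (p - q)"
proof -
  have fin: "finite I" "finite J" using IJ(3) by (metis finite_Un finite_atLeastAtMost)+
  define y where "y l = (if l \<in> I then x l + ereal (q - p) else x l)" for l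
  have yt: "y \<in> tpoints n" using x(1) unfolding tpoints_def y_def by auto
  have "Max ((\<lambda>i. a i + y i) ` I) = Max ((\<lambda>z. z + ereal (q - p)) ` ((\<lambda>i. x i + a i) ` I))"
    unfolding image_image y_def by (intro arg_cong[where f=Max] image_cong) (auto simp: ac_simps)
  also have "\<dots> = Max ((\<lambda>i. x i + a i) ` I) + ereal (q - p)"
    by (rule mono_Max_commute[symmetric]) (use fin IJ in \<open>auto simp: mono_def intro: add_right_mono\<close>)
  also have "\<dots> = ereal q" using p by simp
  finally have eI: "Max ((\<lambda>i. a i + y i) ` I) = ereal q" .
  have "Max ((\<lambda>j. a j + y j) ` J) = Max ((\<lambda>j. x j + a j) ` J)"
    unfolding y_def using IJ(4) by (intro arg_cong[where f=Max] image_cong) (auto simp: ac_simps)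
  with q eI have yH: "y \<in> signed_hyperplane n I J a" using yt unfolding signed_hyperplane_def by auto
  have "\<forall>l\<in>{1..n}. ereal 0 + y l \<le> x l \<and> x l \<le> ereal (p - q) + y l"
  proof
    fix l assume l: "l \<in> {1..n}"
    then have "x l \<noteq> \<infinity>" using x(1) unfolding tpoints_def by auto
    then show "ereal 0 + y l \<le> x l \<and> x l \<le> ereal (p - q) + y l"
      unfolding y_def using pq by (cases "x l") auto
  qed
  then have "hilbert_dist n x y \<le> ereal (p - q - 0)" by (rule dist_upper[OF x(2)])
  then show ?thesis using yH by auto
qed

theorem proposition5p3:
  fixes n :: nat and I J :: "nat set" and x a :: "nat \<Rightarrow> ereal"
  assumes "I \<noteq> {}" and "J \<noteq> {}"
    and "I \<union> J = {1..n}" and "I \<inter> J = {}"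
    and "x \<in> tpoints n" and "a \<in> tpoints n"
    and "\<not> is_bot n x" and "\<not> is_bot n a"
  shows "(\<bar>Max ((\<lambda>i. x i + a i) ` I)\<bar> \<noteq> \<infinity> \<or> \<bar>Max ((\<lambda>j. x j + a j) ` J)\<bar> \<noteq> \<infinity>
           \<longrightarrow> hilbert_setdist n x (signed_hyperplane n I J a)
               = \<bar>Max ((\<lambda>i. x i + a i) ` I) - Max ((\<lambda>j. x j + a j) ` J)\<bar>)
       \<and> (\<bar>Max ((\<lambda>i. x i + a i) ` I)\<bar> = \<infinity> \<and> \<bar>Max ((\<lambda>j. x j + a j) ` J)\<bar> = \<infinity>
           \<longrightarrow> hilbert_setdist n x (signed_hyperplane n I J a) = 0)"
proof -
  let ?MI = "Max ((\<lambda>i. x i + a i) ` I)"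
  let ?MJ = "Max ((\<lambda>j. x j + a j) ` J)"
  let ?H = "signed_hyperplane n I J a"
  have fin: "finite I" "finite J" using assms(3) by (metis finite_Un finite_atLeastAtMost)+
  have ni: "x l + a l \<noteq> \<infinity>" if "l \<in> {1..n}" for l
    using that assms(5,6) unfolding tpoints_def by auto
  have niI: "?MI \<noteq> \<infinity>"
  proof -
    have "?MI \<in> (\<lambda>i. x i + a i) ` I" using fin assms(1) by (intro Max_in) auto
    then obtain i where "i \<in> I" "?MI = x i + a i" by blast
    moreover have "i \<in> {1..n}" using assms(3) calculation(1) by blast
    ultimately show ?thesis using ni by metis
  qed
  have niJ: "?MJ \<noteq> \<infinity>"
  proof -
    have "?MJ \<in> (\<lambda>j. x j + a j) ` J" using fin assms(2) by (intro Max_in) auto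
    then obtain i where "i \<in> J" "?MJ = x i + a i" by blast
    moreover have "i \<in> {1..n}" using assms(3) calculation(1) by blast
    ultimately show ?thesis using ni by metis
  qed
  have lowb: "\<bar>?MI - ?MJ\<bar> \<le> hilbert_setdist n x ?H" if nb: "\<not> (?MI = -\<infinity> \<and> ?MJ = -\<infinity>)"
    unfolding hilbert_setdist_def
  proof (rule INF_greatest)
    fix y assume yH: "y \<in> ?H"
    show "\<bar>?MI - ?MJ\<bar> \<le> hilbert_dist n x y"
      by (rule dist_lower[OF assms(7)], rule lower_key[OF assms(1-3) yH _ nb niI niJ])
  qed
  have part1: "hilbert_setdist n x ?H = \<bar>?MI - ?MJ\<bar>" if nb: "\<not> (?MI = -\<infinity> \<and> ?MJ = -\<infinity>)"
  proof (cases "\<bar>?MI\<bar> \<noteq> \<infinity> \<and> \<bar>?MJ\<bar> \<noteq> \<infinity>")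
    case True
    then obtain p q where p: "?MI = ereal p" and q: "?MJ = ereal q" by auto
    have "hilbert_setdist n x ?H \<le> ereal \<bar>p - q\<bar>"
    proof (cases "q \<le> p")
      case True
      from upper_key[OF assms(1-4) assms(5,7) p q True] obtain y where
        "y \<in> ?H" "hilbert_dist n x y \<le> ereal (p - q)" by blast
      then show ?thesis unfolding hilbert_setdist_def using True by (intro INF_lower2) auto
    next
      case False
      have "J \<union> I = {1..n}" "J \<inter> I = {}" using assms(3,4) by auto
      from upper_key[OF assms(2,1) this assms(5,7) q p] False obtain y where
        "y \<in> signed_hyperplane n J I a" "hilbert_dist n x y \<le> ereal (q - p)" by force
      then show ?thesis unfolding hilbert_setdist_def using False hyp_sym[of n J I a]
        by (intro INF_lower2) auto
    qed
    then show ?thesis using lowb[OF nb] p q by (intro antisym) auto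
  next
    case False
    then have "\<bar>?MI - ?MJ\<bar> = \<infinity>" using nb niI niJ
      by (cases ?MI; cases ?MJ) auto
    then show ?thesis using lowb[OF nb] by simp
  qed
  have part2: "hilbert_setdist n x ?H = 0" if b: "?MI = -\<infinity>" "?MJ = -\<infinity>"
  proof -
    have "x \<in> ?H" using b assms(5) unfolding signed_hyperplane_def by (simp add: add.commute)
    moreover have "hilbert_dist n x x \<le> ereal (0 - 0)" by (rule dist_upper[OF assms(7)]) auto
    ultimately have "hilbert_setdist n x ?H \<le> 0" unfolding hilbert_setdist_def
      by (intro INF_lower2) (auto simp: zero_ereal_def)
    moreover have "0 \<le> hilbert_setdist n x ?H" unfolding hilbert_setdist_def
      by (rule INF_greatest, rule dist_nonneg[OF assms(7,5)])
    ultimately show ?thesis by simp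
  qed
  show ?thesis
  proof (intro conjI impI)
    assume "\<bar>?MI\<bar> \<noteq> \<infinity> \<or> \<bar>?MJ\<bar> \<noteq> \<infinity>"
    then show "hilbert_setdist n x ?H = \<bar>?MI - ?MJ\<bar>" by (intro part1) auto
  next
    assume "\<bar>?MI\<bar> = \<infinity> \<and> \<bar>?MJ\<bar> = \<infinity>"
    then have "?MI = -\<infinity>" "?MJ = -\<infinity>" using niI niJ by (cases ?MI; cases ?MJ; auto)+
    then show "hilbert_setdist n x ?H = 0" by (rule part2)
  qed
qed

end
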